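(* Let $N,M\ge1$, let $a_1,\dots,a_M\ge 2$ be real numbers, and for each $m=1,\dots,M$ let $i_m,j_m,k_m\in\{1,\dots,N\}$. Consider the system of inequalities in real variables $x_1,\dots,x_N$: $$a_m x_{i_m}\le x_{j_m}+x_{k_m}\quad (m=1,\dots,M),\qquad x_i>0\quad(i=1,\dots,N).$$ Let $\vec D$ be the digraph on vertex set $\{1,\dots,N\}$ which, for each $m$, contains the directed edges $(i_m,j_m)$ and $(i_m,k_m)$. If $\vec D$ is strongly connected, then the system is feasible if and only if $a_1=a_2=\cdots=a_M=2$, and in that case the feasible solutions are exactly those with $x_1=x_2=\cdots=x_N$. *)

theory Defs
  imports Complex_Main
begin

definition feasible_sol ::
  "nat \<Rightarrow> nat \<Rightarrow> (nat \<Rightarrow> real) \<Rightarrow> (nat \<Rightarrow> nat) \<Rightarrow> (nat \<Rightarrow> nat) \<Rightarrow> (nat \<Rightarrow> nat)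
     \<Rightarrow> (nat \<Rightarrow> real) \<Rightarrow> bool" where
  "feasible_sol N M a i j k x \<longleftrightarrow>
     (\<forall>m\<in>{1..M}. a m * x (i m) \<le> x (j m) + x (k m)) \<and> (\<forall>p\<in>{1..N}. x p > 0)"

definition sys_edges :: "nat \<Rightarrow> (nat \<Rightarrow> nat) \<Rightarrow> (nat \<Rightarrow> nat) \<Rightarrow> (nat \<Rightarrow> nat) \<Rightarrow> (nat \<times> nat) set" where
  "sys_edges M i j k = {(i m, j m) | m. m \<in> {1..M}} \<union> {(i m, k m) | m. m \<in> {1..M}}"

definition strongly_connected_digraph :: "nat set \<Rightarrow> (nat \<times> nat) set \<Rightarrow> bool" where
  "strongly_connected_digraph V E \<longleftrightarrow> (\<forall>u\<in>V. \<forall>v\<in>V. (u, v) \<in> E\<^sup>*)"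

end

theory Submission
  imports Defs
begin

lemma feas_const:
  fixes N M :: nat and a :: "nat \<Rightarrow> real" and i j k :: "nat \<Rightarrow> nat"
  assumes "N \<ge> 1"
    and a2: "\<forall>m\<in>{1..M}. a m \<ge> 2"
    and ijk: "\<forall>m\<in>{1..M}. i m \<in> {1..N} \<and> j m \<in> {1..N} \<and> k m \<in> {1..N}"
    and sc: "strongly_connected_digraph {1..N} (sys_edges M i j k)"
    and f: "feasible_sol N M a i j k x"
  shows "(\<forall>p\<in>{1..N}. x p = Max (x ` {1..N})) \<and> (\<forall>m\<in>{1..M}. a m = 2)"
proof -
  define X where "X = Max (x ` {1..N})"
  have ne: "x ` {1..N} \<noteq> {}" using assms(1) by auto
  have le: "\<And>p. p \<in> {1..N} \<Longrightarrow> x p \<le> X" unfolding X_def by (rule Max_ge) auto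
  obtain p0 where p0: "p0 \<in> {1..N}" "x p0 = X"
    using Max_in[OF _ ne] unfolding X_def by auto
  have pos: "\<And>p. p \<in> {1..N} \<Longrightarrow> x p > 0" using f unfolding feasible_sol_def by auto
  have Xpos: "X > 0" using pos[OF p0(1)] p0(2) by simp
  have key: "\<And>m. m \<in> {1..M} \<Longrightarrow> x (i m) = X \<Longrightarrow> x (j m) = X \<and> x (k m) = X \<and> a m = 2"
  proof -
    fix m assume m: "m \<in> {1..M}" and xi: "x (i m) = X"
    have c: "a m * X \<le> x (j m) + x (k m)" using f m xi unfolding feasible_sol_def by auto
    have "2 * X \<le> a m * X" using a2 m Xpos by (intro mult_right_mono) auto
    moreover have "x (j m) \<le> X" "x (k m) \<le> X" using ijk m le by auto
    moreover have "a m * X \<le> 2 * X \<Longrightarrow> a m \<le> 2" using Xpos by simp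
    moreover have "a m \<ge> 2" using a2 m by blast
    ultimately show "x (j m) = X \<and> x (k m) = X \<and> a m = 2" using c by linarith
  qed
  have reach: "\<And>v. (p0, v) \<in> (sys_edges M i j k)\<^sup>* \<Longrightarrow> x v = X"
  proof -
    fix v assume "(p0, v) \<in> (sys_edges M i j k)\<^sup>*"
    then show "x v = X"
    proof (induction rule: rtrancl_induct)
      case base then show ?case using p0 by simp
    next
      case (step y z)
      then obtain m where "m \<in> {1..M}" "y = i m" "z = j m \<or> z = k m"
        unfolding sys_edges_def by blast
      then show ?case using key step.IH by auto
    qed
  qed
  have all: "\<forall>p\<in>{1..N}. x p = X"
  proof
    fix p assume "p \<in> {1..N}"
    then have "(p0, p) \<in> (sys_edges M i j k)\<^sup>*" using sc p0(1) unfolding strongly_connected_digraph_def by blast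
    then show "x p = X" by (rule reach)
  qed
  have "\<forall>m\<in>{1..M}. a m = 2"
  proof
    fix m assume m: "m \<in> {1..M}"
    then have "x (i m) = X" using all ijk by blast
    then show "a m = 2" using key m by blast
  qed
  then show ?thesis using all unfolding X_def by blast
qed

theorem lemma2p3:
  fixes N M :: nat and a :: "nat \<Rightarrow> real" and i j k :: "nat \<Rightarrow> nat"
  assumes "N \<ge> 1" and "M \<ge> 1"
    and "\<forall>m\<in>{1..M}. a m \<ge> 2"
    and "\<forall>m\<in>{1..M}. i m \<in> {1..N} \<and> j m \<in> {1..N} \<and> k m \<in> {1..N}"
    and "strongly_connected_digraph {1..N} (sys_edges M i j k)"
  shows "((\<exists>x. feasible_sol N M a i j k x) \<longleftrightarrow> (\<forall>m\<in>{1..M}. a m = 2))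
       \<and> ((\<forall>m\<in>{1..M}. a m = 2) \<longrightarrow>
            (\<forall>x. feasible_sol N M a i j k x \<longleftrightarrow>
                 (\<forall>p\<in>{1..N}. x p > 0) \<and> (\<forall>p\<in>{1..N}. \<forall>q\<in>{1..N}. x p = x q)))"
proof (rule conjI, rule iffI, goal_cases)
  case 1
  then obtain x where "feasible_sol N M a i j k x" by blast
  then show "\<forall>m\<in>{1..M}. a m = 2" using feas_const[OF assms(1,3,4,5)] by blast
next
  case 2
  then show "\<exists>x. feasible_sol N M a i j k x"
    by (intro exI[of _ "\<lambda>_. 1"]) (auto simp: feasible_sol_def)
next
  case 3
  show ?case
  proof (intro impI allI iffI)
  fix x :: "nat \<Rightarrow> real" assume a0: "\<forall>m\<in>{1..M}. a m = 2" and f0: "feasible_sol N M a i j k x"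
  show "(\<forall>p\<in>{1..N}. x p > 0) \<and> (\<forall>p\<in>{1..N}. \<forall>q\<in>{1..N}. x p = x q)"
  proof -
    note f = f0
    obtain X where hX: "\<forall>p\<in>{1..N}. x p = X" using feas_const[OF assms(1,3,4,5) f] by blast
    have "\<forall>p\<in>{1..N}. \<forall>q\<in>{1..N}. x p = x q"
    proof (intro ballI)
      fix p q assume "p \<in> {1..N}" "q \<in> {1..N}"
      then show "x p = x q" using hX by simp
    qed
    moreover have "\<forall>p\<in>{1..N}. x p > 0" using f unfolding feasible_sol_def by blast
    ultimately show ?thesis by blast
  qed
next
  fix x :: "nat \<Rightarrow> real" assume a: "\<forall>m\<in>{1..M}. a m = 2" and h: "(\<forall>p\<in>{1..N}. x p > 0) \<and> (\<forall>p\<in>{1..N}. \<forall>q\<in>{1..N}. x p = x q)"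
  have "\<forall>m\<in>{1..M}. a m * x (i m) \<le> x (j m) + x (k m)"
  proof
    fix m assume m: "m \<in> {1..M}"
    then have "x (j m) = x (i m)" "x (k m) = x (i m)" using h assms(4) by auto
    then show "a m * x (i m) \<le> x (j m) + x (k m)" using a m by simp
  qed
  then show "feasible_sol N M a i j k x" using h unfolding feasible_sol_def by blast
  qed
qed

end
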